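(* Let $p\ge1$ and let $f\colon[0,1]\to\mathbb{R}$ be bounded and of finite $p$-variation $V_p(f)$. Then for every $x>0$, $$\left|\int_0^1 f(t)e(xt)\,dt\right|\le V_p(f)\left(\frac1x\right)^{\frac1p}+\frac{\|f\|_{L^\infty}}{x}.$$
   Context: $e(t):=e^{-2\pi\mathrm{i}t}$. For $p\ge1$ the $p$-variation of $f\colon[0,1]\to\mathbb{C}$ is $V_p(f)=\left(\sup\sum_{k=1}^n|f(x_k)-f(x_{k-1})|^p\right)^{1/p}\in[0,\infty]$, the supremum over all $n\in\mathbb{N}$ and partitions $0=x_0<x_1<\dots<x_n=1$; $f$ is of finite $p$-variation if $V_p(f)<\infty$. *)

theory Defs
  imports "HOL-Analysis.Analysis"
begin

definition e :: "real \<Rightarrow> complex" where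
  "e t = exp (- 2 * complex_of_real pi * \<i> * complex_of_real t)"

definition pvar_sums :: "real \<Rightarrow> (real \<Rightarrow> 'a::real_normed_vector) \<Rightarrow> real set" where
  "pvar_sums p f = {(\<Sum>k\<in>{1..n}. norm (f (x k) - f (x (k - 1))) powr p) | n x.
       n \<ge> 1 \<and> x 0 = 0 \<and> x n = 1 \<and> (\<forall>k<n. x k < x (Suc k))}"

definition finite_pvariation :: "real \<Rightarrow> (real \<Rightarrow> 'a::real_normed_vector) \<Rightarrow> bool" where
  "finite_pvariation p f \<longleftrightarrow> bdd_above (pvar_sums p f)"

definition pvariation :: "real \<Rightarrow> (real \<Rightarrow> 'a::real_normed_vector) \<Rightarrow> real" where
  "pvariation p f = (Sup (pvar_sums p f)) powr (1 / p)"

definition Linf_norm :: "(real \<Rightarrow> real) \<Rightarrow> real" where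
  "Linf_norm f = Inf {C. C \<ge> 0 \<and> (AE t in lebesgue. t \<in> {0..1} \<longrightarrow> \<bar>f t\<bar> \<le> C)}"

end

theory Submission
  imports Defs
begin

lemma holder_pos:
  fixes a :: "'i \<Rightarrow> real"
  assumes p: "p \<ge> 1" and fin: "finite K" and ne: "K \<noteq> {}" and pos: "\<forall>i\<in>K. a i > 0"
  shows "(\<Sum>i\<in>K. a i) \<le> real (card K) powr (1 - 1/p) * (\<Sum>i\<in>K. a i powr p) powr (1/p)"
proof -
  define n where "n = real (card K)"
  have n: "n > 0" using fin ne by (simp add: n_def card_gt_0_iff)
  have "(\<Sum>i\<in>K. (1/n) *\<^sub>R a i) powr p \<le> (\<Sum>i\<in>K. (1/n) * a i powr p)"
    using convex_on_sum[OF fin ne powr_convex[OF p], of "\<lambda>_. 1/n" a] n pos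
    by (simp add: n_def)
  then have j: "((\<Sum>i\<in>K. a i) / n) powr p \<le> (\<Sum>i\<in>K. a i powr p) / n"
    by (simp add: sum_divide_distrib sum_distrib_left)
  have sp: "(\<Sum>i\<in>K. a i) / n \<ge> 0" using pos n by (simp add: sum_nonneg less_imp_le)
  have "(\<Sum>i\<in>K. a i) / n = (((\<Sum>i\<in>K. a i) / n) powr p) powr (1/p)"
    using sp p n pos by (simp add: powr_powr sum_nonneg less_imp_le)
  also have "\<dots> \<le> ((\<Sum>i\<in>K. a i powr p) / n) powr (1/p)"
    by (rule powr_mono2) (use j p in auto)
  also have "\<dots> = (\<Sum>i\<in>K. a i powr p) powr (1/p) / n powr (1/p)"
    using n by (simp add: powr_divide sum_nonneg)
  finally have "(\<Sum>i\<in>K. a i) \<le> n * ((\<Sum>i\<in>K. a i powr p) powr (1/p) / n powr (1/p))"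
    using n by (simp add: field_simps)
  also have "\<dots> = n powr (1 - 1/p) * (\<Sum>i\<in>K. a i powr p) powr (1/p)"
    using n by (simp add: powr_diff)
  finally show ?thesis by (simp add: n_def)
qed

lemma holder_nonneg:
  fixes a :: "nat \<Rightarrow> real"
  assumes p: "p \<ge> 1" and nn: "\<forall>i<m. a i \<ge> 0"
  shows "(\<Sum>i<m. a i) \<le> real m powr (1 - 1/p) * (\<Sum>i<m. a i powr p) powr (1/p)"
proof -
  define K where "K = {i. i < m \<and> a i > 0}"
  have Ksub: "K \<subseteq> {..<m}" and fK: "finite K" by (auto simp: K_def)
  have s1: "(\<Sum>i<m. a i) = (\<Sum>i\<in>K. a i)"
    by (rule sum.mono_neutral_right) (use nn in \<open>force simp: K_def\<close>)+
  have s2: "(\<Sum>i<m. a i powr p) = (\<Sum>i\<in>K. a i powr p)"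
    by (rule sum.mono_neutral_right) (use nn in \<open>force simp: K_def\<close>)+
  show ?thesis
  proof (cases "K = {}")
    case True
    then show ?thesis using s1 by simp
  next
    case False
    have "(\<Sum>i\<in>K. a i) \<le> real (card K) powr (1 - 1/p) * (\<Sum>i\<in>K. a i powr p) powr (1/p)"
      by (rule holder_pos[OF p fK False]) (auto simp: K_def)
    also have "\<dots> \<le> real m powr (1 - 1/p) * (\<Sum>i\<in>K. a i powr p) powr (1/p)"
    proof (rule mult_right_mono)
      have "card K \<le> m" using card_mono[OF _ Ksub] by simp
      then show "real (card K) powr (1 - 1/p) \<le> real m powr (1 - 1/p)"
        using p by (intro powr_mono2) auto
    qed simp
    finally show ?thesis using s1 s2 by simp
  qed
qed

lemma chain_le0:
  fixes f :: "real \<Rightarrow> 'a::real_normed_vector"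
  assumes fp: "finite_pvariation p f" and st: "\<forall>k<n. y k < y (Suc k)"
    and y0: "y 0 = 0" and yn: "y n \<le> 1" and n: "n \<ge> 1"
  shows "(\<Sum>k\<in>{1..n}. norm (f (y k) - f (y (k - 1))) powr p) \<le> Sup (pvar_sums p f)"
proof (cases "y n = 1")
  case True
  have "(\<Sum>k\<in>{1..n}. norm (f (y k) - f (y (k - 1))) powr p) \<in> pvar_sums p f"
    unfolding pvar_sums_def using True y0 st n by blast
  then show ?thesis using fp unfolding finite_pvariation_def by (rule cSup_upper)
next
  case False
  define z where "z = (\<lambda>k. if k \<le> n then y k else 1)"
  have "(\<Sum>k\<in>{1..Suc n}. norm (f (z k) - f (z (k - 1))) powr p) \<in> pvar_sums p f"
    unfolding pvar_sums_def
  proof (intro CollectI exI conjI)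
    show "\<forall>k<Suc n. z k < z (Suc k)"
      using st False yn by (auto simp: z_def less_Suc_eq)
  qed (use y0 in \<open>auto simp: z_def\<close>)
  then have "(\<Sum>k\<in>{1..Suc n}. norm (f (z k) - f (z (k - 1))) powr p) \<le> Sup (pvar_sums p f)"
    using fp unfolding finite_pvariation_def by (rule cSup_upper)
  moreover have "(\<Sum>k\<in>{1..Suc n}. norm (f (z k) - f (z (k - 1))) powr p)
     = (\<Sum>k\<in>{1..n}. norm (f (y k) - f (y (k - 1))) powr p) + norm (f (z (Suc n)) - f (z n)) powr p"
    by (simp add: z_def, intro sum.cong) auto
  moreover have "(\<Sum>k\<in>{1..n}. norm (f (z k) - f (z (k - 1))) powr p) = (\<Sum>k\<in>{1..n}. norm (f (y k) - f (y (k - 1))) powr p)"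
    by (rule sum.cong) (auto simp: z_def)
  ultimately show ?thesis by (smt (verit) powr_ge_zero)
qed

lemma Sup_nonneg:
  fixes f :: "real \<Rightarrow> 'a::real_normed_vector"
  assumes fp: "finite_pvariation p f"
  shows "0 \<le> Sup (pvar_sums p f)"
proof -
  have "(\<Sum>k\<in>{1..1::nat}. norm (f (real k) - f (real (k - 1))) powr p) \<le> Sup (pvar_sums p f)"
    by (rule chain_le0[OF fp]) auto
  moreover have "0 \<le> (\<Sum>k\<in>{1..1::nat}. norm (f (real k) - f (real (k - 1))) powr p)"
    by (intro sum_nonneg) auto
  ultimately show ?thesis by linarith
qed

lemma chain_le:
  fixes f :: "real \<Rightarrow> 'a::real_normed_vector"
  assumes fp: "finite_pvariation p f" and st: "\<forall>k<n. y k < y (Suc k)"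
    and y0: "y 0 \<ge> 0" and yn: "y n \<le> 1"
  shows "(\<Sum>k\<in>{1..n}. norm (f (y k) - f (y (k - 1))) powr p) \<le> Sup (pvar_sums p f)"
proof (cases "n = 0")
  case True
  then show ?thesis using Sup_nonneg[OF fp] by simp
next
  case n: False
  show ?thesis
  proof (cases "y 0 = 0")
    case True
    then show ?thesis using chain_le0[OF fp st True yn] n by simp
  next
    case False
    define z where "z = (\<lambda>k. if k = 0 then 0 else y (k - 1))"
    have zst: "\<forall>k<Suc n. z k < z (Suc k)"
    proof (intro allI impI)
      fix k assume k: "k < Suc n"
      show "z k < z (Suc k)"
      proof (cases k)
        case 0
        then show ?thesis using y0 False by (auto simp: z_def)
      qed (use st k in \<open>auto simp: z_def\<close>)
    qed
    have "(\<Sum>k\<in>{1..Suc n}. norm (f (z k) - f (z (k - 1))) powr p) \<le> Sup (pvar_sums p f)"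
      by (rule chain_le0[OF fp zst]) (use yn in \<open>auto simp: z_def\<close>)
    moreover have "(\<Sum>k\<in>{1..Suc n}. norm (f (z k) - f (z (k - 1))) powr p)
       = norm (f (z 1) - f (z 0)) powr p + (\<Sum>k\<in>{Suc 1..Suc n}. norm (f (z k) - f (z (k - 1))) powr p)"
      by (subst sum.atLeast_Suc_atMost) auto
    moreover have "(\<Sum>k\<in>{Suc 1..Suc n}. norm (f (z k) - f (z (k - 1))) powr p)
       = (\<Sum>k\<in>{1..n}. norm (f (y k) - f (y (k - 1))) powr p)"
      by (subst sum.shift_bounds_cl_Suc_ivl) (rule sum.cong, auto simp: z_def)
    ultimately show ?thesis by (smt (verit) powr_ge_zero)
  qed
qed

lemma shifted_sum_le:
  fixes f :: "real \<Rightarrow> real"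
  assumes fp: "finite_pvariation p f" and x: "x > 0" and mx: "real m / x \<le> 1"
    and s0: "0 < s" and s1: "s < 1 / x"
  shows "(\<Sum>k<m. \<bar>f (real k / x + s) - f (real k / x)\<bar> powr p) \<le> Sup (pvar_sums p f)"
proof (cases "m = 0")
  case True
  then show ?thesis using Sup_nonneg[OF fp] by simp
next
  case False
  define y where "y = (\<lambda>j::nat. real (j div 2) / x + (if odd j then s else 0))"
  define n where "n = 2 * m - 1"
  define T where "T = (\<lambda>j. norm (f (y j) - f (y (j - 1))) powr p)"
  have st: "\<forall>k<n. y k < y (Suc k)"
  proof (intro allI impI)
    fix k assume "k < n"
    show "y k < y (Suc k)"
    proof (cases "even k")
      case True
      then show ?thesis using s0 by (simp add: y_def)
    next
      case False
      then have "Suc k div 2 = k div 2 + 1" by presburger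
      then have "y (Suc k) = (real (k div 2) + 1) / x" using False by (simp add: y_def)
      also have "\<dots> = real (k div 2) / x + 1 / x" by (simp add: add_divide_distrib)
      finally show ?thesis using False s1 by (simp add: y_def)
    qed
  qed
  have "n div 2 = m - 1" "odd n" using False by (auto simp: n_def)
  then have "y n = real (m - 1) / x + s" by (simp add: y_def)
  also have "\<dots> \<le> real m / x"
  proof -
    have "real (m - 1) / x + 1 / x = real m / x" using False
      by (simp add: add_divide_distrib[symmetric] of_nat_diff)
    then show ?thesis using s1 by linarith
  qed
  finally have yn: "y n \<le> 1" using mx by linarith
  have ch: "(\<Sum>j\<in>{1..n}. T j) \<le> Sup (pvar_sums p f)"
    unfolding T_def by (rule chain_le[OF fp st _ yn]) (simp add: y_def)
  have "(\<Sum>k<m. \<bar>f (real k / x + s) - f (real k / x)\<bar> powr p) = (\<Sum>k<m. T (2 * k + 1))"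
    by (rule sum.cong) (auto simp: T_def y_def)
  also have "\<dots> = (\<Sum>j\<in>(\<lambda>k. 2 * k + 1) ` {..<m}. T j)"
    by (subst sum.reindex) (auto simp: inj_on_def)
  also have "\<dots> \<le> (\<Sum>j\<in>{1..n}. T j)"
    by (rule sum_mono2) (auto simp: T_def n_def)
  finally show ?thesis using ch by linarith
qed

lemma G_bound:
  fixes f :: "real \<Rightarrow> real"
  assumes p: "p \<ge> 1" and fp: "finite_pvariation p f" and x: "x > 0" and mx: "real m / x \<le> 1"
    and s0: "0 < s" and s1: "s < 1 / x"
  shows "\<bar>\<Sum>k<m. f (real k / x + s) - f (real k / x)\<bar>
     \<le> real m powr (1 - 1/p) * Sup (pvar_sums p f) powr (1/p)"
proof -
  have "\<bar>\<Sum>k<m. f (real k / x + s) - f (real k / x)\<bar> \<le> (\<Sum>k<m. \<bar>f (real k / x + s) - f (real k / x)\<bar>)"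
    by (rule sum_abs)
  also have "\<dots> \<le> real m powr (1 - 1/p) * (\<Sum>k<m. \<bar>f (real k / x + s) - f (real k / x)\<bar> powr p) powr (1/p)"
    by (rule holder_nonneg[OF p]) auto
  also have "\<dots> \<le> real m powr (1 - 1/p) * Sup (pvar_sums p f) powr (1/p)"
    by (intro mult_left_mono powr_mono2 shifted_sum_le[OF fp x mx s0 s1]) (use p in \<open>auto intro: sum_nonneg\<close>)
  finally show ?thesis .
qed

lemma norm_e [simp]: "norm (e y) = 1"
  unfolding e_def by (simp add: norm_exp_eq_Re)

lemma e_shift:
  assumes x: "x > 0"
  shows "e (x * (real k / x + s)) = e (x * s)"
proof -
  have xs: "x * (real k / x + s) = real k + x * s" using x by (simp add: field_simps)
  have "exp (- (2 * complex_of_real pi * \<i> * of_nat k)) = 1"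
  proof -
    have "exp (of_nat k * (2 * complex_of_real pi * \<i>)) = 1"
      by (simp add: exp_of_nat_mult)
    then show ?thesis by (simp add: exp_minus mult.commute)
  qed
  moreover have "e (real k + x * s) = exp (- (2 * complex_of_real pi * \<i> * of_nat k)) * e (x * s)"
    unfolding e_def by (simp add: exp_add[symmetric] algebra_simps)
  ultimately show ?thesis using xs by simp
qed

lemma e_int:
  assumes x: "x > 0"
  shows "((\<lambda>s. e (x * s)) has_integral 0) {0..1/x}"
proof -
  define c where "c = - 2 * complex_of_real pi * \<i> * complex_of_real x"
  have c0: "c \<noteq> 0" using x by (simp add: c_def)
  have ee: "e (x * s) = exp (c * complex_of_real s)" for s
    unfolding e_def c_def by (simp add: algebra_simps)
  have der: "((\<lambda>s. exp (c * complex_of_real s) / c) has_vector_derivative exp (c * complex_of_real s)) (at s within {0..1/x})" for s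
  proof -
    have "((\<lambda>z. exp (c * z) / c) has_field_derivative exp (c * complex_of_real s)) (at (complex_of_real s))"
      using c0 by (auto intro!: derivative_eq_intros)
    then show ?thesis by (rule has_vector_derivative_real_field)
  qed
  have "((\<lambda>s. exp (c * complex_of_real s)) has_integral
      (exp (c * complex_of_real (1/x)) / c - exp (c * complex_of_real 0) / c)) {0..1/x}"
    by (rule fundamental_theorem_of_calculus) (use x der in auto)
  moreover have "exp (c * complex_of_real (1/x)) = 1"
    using x by (simp add: c_def exp_minus)
  ultimately show ?thesis by (simp add: ee)
qed

lemma main_part:
  fixes f :: "real \<Rightarrow> real"
  assumes p: "p \<ge> 1" and fp: "finite_pvariation p f" and x: "x > 0"
    and m1: "m \<ge> 1" and mx: "real m \<le> x"
    and hint: "(\<lambda>t. complex_of_real (f t) * e (x * t)) integrable_on {0..1}"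
  shows "norm (integral {0..real m / x} (\<lambda>t. complex_of_real (f t) * e (x * t)))
     \<le> Sup (pvar_sums p f) powr (1/p) * (1/x) powr (1/p)"
proof -
  define h where "h = (\<lambda>t. complex_of_real (f t) * e (x * t))"
  define S where "S = Sup (pvar_sums p f)"
  have S0: "S \<ge> 0" unfolding S_def by (rule Sup_nonneg[OF fp])
  have mx1: "real m / x \<le> 1" using mx x by simp
  have sub: "integral {0..real j / x} h = (\<Sum>k<j. integral {real k / x..real (Suc k) / x} h)" if "j \<le> m" for j
    using that
  proof (induction j)
    case 0
    then show ?case by simp
  next
    case (Suc j)
    have le: "real (Suc j) / x \<le> 1"
      using Suc.prems mx x by (simp add: divide_le_eq)
    have int: "h integrable_on {0..real (Suc j) / x}"
      by (rule integrable_subinterval_real[OF hint[folded h_def]]) (use le in auto)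
    have "integral {0..real (Suc j) / x} h = integral {0..real j / x} h + integral {real j / x..real (Suc j) / x} h"
    proof -
      have "0 \<le> real j / x" "real j / x \<le> real (Suc j) / x" using x by (auto simp: divide_right_mono)
      then show ?thesis using Henstock_Kurzweil_Integration.integral_combine[where a=0 and c="real j / x" and b="real (Suc j) / x" and f=h] int by simp
    qed
    then show ?case using Suc by simp
  qed
  have shift: "((\<lambda>s. e (x * s) * complex_of_real (f (real k / x + s))) has_integral
       integral {real k / x..real (Suc k) / x} h) {0..1/x}" if k: "k < m" for k
  proof -
    have le: "real (Suc k) / x \<le> 1"
      using k mx x by (simp add: divide_le_eq)
    have int: "h integrable_on {real k / x..real (Suc k) / x}"
      by (rule integrable_subinterval_real[OF hint[folded h_def]]) (use le x in auto)
    have eq: "{0 + real k / x..1/x + real k / x} = {real k / x..real (Suc k) / x}"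
      by (simp add: add_divide_distrib)
    have "((h \<circ> (+) (real k / x)) has_integral integral {real k / x..real (Suc k) / x} h) {0..1/x}"
      unfolding has_integral_shift_Icc_real eq using int by (simp add: integrable_integral)
    moreover have "(h \<circ> (+) (real k / x)) = (\<lambda>s. e (x * s) * complex_of_real (f (real k / x + s)))"
      using e_shift[OF x, of k] by (auto simp: h_def add.commute mult.commute)
    ultimately show ?thesis by simp
  qed
  define I0 where "I0 = integral {0..real m / x} h"
  have I0: "((\<lambda>s. \<Sum>k<m. e (x * s) * complex_of_real (f (real k / x + s))) has_integral I0) {0..1/x}"
    unfolding I0_def sub[OF order_refl]
    by (rule has_integral_sum) (use shift in auto)
  define G0 where "G0 = (\<Sum>k<m. f (real k / x))"
  have Z: "((\<lambda>s. e (x * s) * complex_of_real G0) has_integral 0) {0..1/x}"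
    using has_integral_mult_left[OF e_int[OF x], of "complex_of_real G0"] by simp
  have D: "((\<lambda>s. (\<Sum>k<m. e (x * s) * complex_of_real (f (real k / x + s))) - e (x * s) * complex_of_real G0)
      has_integral I0) {0..1/x}"
    using has_integral_diff[OF I0 Z] by simp
  define B where "B = real m powr (1 - 1/p) * S powr (1/p)"
  have B0: "B \<ge> 0" by (simp add: B_def)
  have "norm I0 \<le> B * Henstock_Kurzweil_Integration.content {0..1/x}"
  proof (rule has_integral_bound_real[OF B0 _ D])
    show "finite {0, 1/x}" by simp
    fix s assume s: "s \<in> {0..1/x} - {0, 1/x}"
    then have s0: "0 < s" and s1: "s < 1/x" by auto
    have "(\<Sum>k<m. e (x * s) * complex_of_real (f (real k / x + s))) - e (x * s) * complex_of_real G0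
        = e (x * s) * complex_of_real (\<Sum>k<m. f (real k / x + s) - f (real k / x))"
      by (simp add: G0_def sum_distrib_left sum_subtractf right_diff_distrib)
    then have "norm ((\<Sum>k<m. e (x * s) * complex_of_real (f (real k / x + s))) - e (x * s) * complex_of_real G0)
        = \<bar>\<Sum>k<m. f (real k / x + s) - f (real k / x)\<bar>"
      by (simp only: norm_mult norm_e norm_of_real mult_1)
    also have "\<dots> \<le> B" unfolding B_def S_def by (rule G_bound[OF p fp x mx1 s0 s1])
    finally show "norm ((\<Sum>k<m. e (x * s) * complex_of_real (f (real k / x + s))) - e (x * s) * complex_of_real G0) \<le> B" .
  qed
  also have "\<dots> = B / x" using x by simp
  also have "\<dots> \<le> x powr (1 - 1/p) * S powr (1/p) / x"
    unfolding B_def using x p mx by (intro divide_right_mono mult_right_mono powr_mono2) auto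
  also have "\<dots> = S powr (1/p) * (1/x) powr (1/p)"
    using x by (simp add: powr_diff powr_divide)
  finally show ?thesis unfolding I0_def h_def S_def .
qed

theorem mainTheorem2:
  fixes p x :: real and f :: "real \<Rightarrow> real"
  assumes "p \<ge> 1" and "bounded (f ` {0..1})" and "finite_pvariation p f" and "x > 0"
  shows "cmod (integral {0..1} (\<lambda>t. complex_of_real (f t) * e (x * t)))
           \<le> pvariation p f * (1 / x) powr (1 / p) + Linf_norm f / x"
proof -
  note p = assms(1) and bd = assms(2) and fp = assms(3) and x = assms(4)
  define S where "S = Sup (pvar_sums p f)"
  define K where "K = {C. C \<ge> 0 \<and> (AE t in lebesgue. t \<in> {0..1} \<longrightarrow> \<bar>f t\<bar> \<le> C)}"
  define h where "h = (\<lambda>t. complex_of_real (f t) * e (x * t))"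
  define A where "A = S powr (1/p) * (1/x) powr (1/p)"
  have pv: "pvariation p f = S powr (1/p)" by (simp add: pvariation_def S_def)
  have Linf: "Linf_norm f = Inf K" by (simp add: Linf_norm_def K_def)
  obtain B where B: "\<forall>y\<in>f ` {0..1}. norm y \<le> B" using bd by (auto simp: bounded_iff)
  have "max B 0 \<in> K" unfolding K_def using B by (force intro!: AE_I2 simp: le_max_iff_disj)
  then have Kne: "K \<noteq> {}" by blast
  have Inf0: "0 \<le> Inf K" by (rule cInf_greatest[OF Kne]) (auto simp: K_def)
  have A0: "A \<ge> 0" by (simp add: A_def)
  show ?thesis
  proof (cases "h integrable_on {0..1}")
    case False
    then show ?thesis using Inf0 x unfolding h_def[symmetric] pv Linf
      by (simp add: not_integrable_integral)
  next
    case True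
    define m where "m = nat \<lfloor>x\<rfloor>"
    have mx: "real m \<le> x" using x by (simp add: m_def)
    have mx1: "x < real m + 1" using x by (simp add: m_def)
    define a where "a = real m / x"
    have a0: "0 \<le> a" and a1: "a \<le> 1" using mx x by (auto simp: a_def)
    have splt: "integral {0..1} h = integral {0..a} h + integral {a..1} h"
      using Henstock_Kurzweil_Integration.integral_combine[where a=0 and c=a and b=1 and f=h] a0 a1 True
      by simp
    have ax: "1 - a \<le> 1 / x"
    proof -
      have "1 - a = (x - real m) / x" using x by (simp add: a_def field_simps)
      also have "\<dots> \<le> 1 / x" using mx1 x by (intro divide_right_mono) auto
      finally show ?thesis .
    qed
    have mainp: "norm (integral {0..a} h) \<le> A"
    proof (cases "m = 0")
      case True
      then show ?thesis using A0 by (simp add: a_def)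
    next
      case False
      then show ?thesis
        using main_part[OF p fp x _ mx True[unfolded h_def]]
        unfolding A_def S_def a_def h_def by simp
    qed
    have rem: "norm (integral {a..1} h) \<le> C / x" if C: "C \<in> K" for C
    proof -
      have C0: "C \<ge> 0" and ae: "AE t in lebesgue. t \<in> {0..1} \<longrightarrow> \<bar>f t\<bar> \<le> C"
        using C by (auto simp: K_def)
      from ae obtain N where N: "{t \<in> space lebesgue. \<not> (t \<in> {0..1} \<longrightarrow> \<bar>f t\<bar> \<le> C)} \<subseteq> N"
        "emeasure lebesgue N = 0" "N \<in> sets lebesgue" by (rule AE_E)
      have negN: "negligible N" unfolding negligible_iff_null_sets using N by (auto intro: null_setsI)
      define h' where "h' = (\<lambda>t. if t \<in> N then 0 else h t)"
      have hi: "(h has_integral integral {a..1} h) {a..1}"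
        using integrable_subinterval_real[OF True, of a 1] a0 by (auto intro: integrable_integral)
      have hi': "(h' has_integral integral {a..1} h) {a..1}"
        by (rule has_integral_spike[OF negN _ hi]) (auto simp: h'_def)
      have "norm (integral {a..1} h) \<le> C * Henstock_Kurzweil_Integration.content {a..1}"
      proof (rule has_integral_bound_real[OF C0 _ hi', of "{}"])
        fix t assume t: "t \<in> {a..1} - {}"
        show "norm (h' t) \<le> C"
        proof (cases "t \<in> N")
          case True then show ?thesis using C0 by (simp add: h'_def)
        next
          case False
          have "\<bar>f t\<bar> \<le> C"
          proof (rule ccontr)
            assume "\<not> \<bar>f t\<bar> \<le> C"
            then have "t \<in> {t \<in> space lebesgue. \<not> (t \<in> {0..1} \<longrightarrow> \<bar>f t\<bar> \<le> C)}"
              using t a0 by auto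
            then show False using N(1) False by blast
          qed
          then show ?thesis using False by (simp add: h'_def h_def norm_mult)
        qed
      qed simp
      also have "\<dots> = C * (1 - a)" using a1 by simp
      also have "\<dots> \<le> C * (1 / x)" using ax C0 by (intro mult_left_mono) auto
      finally show ?thesis by simp
    qed
    have "x * (norm (integral {0..1} h) - A) \<le> Inf K"
    proof (rule cInf_greatest[OF Kne])
      fix C assume CK: "C \<in> K"
      then have "norm (integral {0..1} h) \<le> A + C / x"
        using splt mainp rem[OF CK] norm_triangle_ineq[of "integral {0..a} h" "integral {a..1} h"] by simp
      then show "x * (norm (integral {0..1} h) - A) \<le> C" using x by (simp add: field_simps)
    qed
    then have "norm (integral {0..1} h) \<le> A + Inf K / x" using x by (simp add: field_simps)
    then show ?thesis unfolding pv Linf A_def h_def by simp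
  qed
qed

end
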